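(* Let $\mathbf A$ be a real symmetric positive definite matrix indexed by the mesh $\mathcal M$, in the FIND setting described in the context. Then for every leaf cluster $\mathcal C_r$ of $\mathcal T$, every consistent ordering of $\mathcal T_r^+$ and every node $g$ of $\mathcal T_r^+$, the matrix $\mathcal U_g=\mathbf A_g(\mathcal B_g,\mathcal B_g)-\mathbf A_g(\mathcal B_g,\mathcal S_g)\mathbf A_g(\mathcal S_g,\mathcal S_g)^{-1}\mathbf A_g(\mathcal S_g,\mathcal B_g)$ is positive definite.
   Context: Setting (FIND). $\mathcal M$ is a finite set of mesh nodes and $\mathbf A$ is a matrix with rows and columns indexed by $\mathcal M$, structurally symmetric ($A_{ij}\neq 0\iff A_{ji}\neq 0$). For a matrix $\mathbf X$ and $X,Y\subseteq\mathcal M$, $\mathbf X(X,Y)$ is the submatrix with rows in $X$ and columns in $Y$. For a cluster $\mathcal C\subseteq\mathcal M$, its boundary set is $\mathcal B_{\mathcal C}=\{i\in\mathcal C: A_{ij}\neq 0\text{ for some } j\notin\mathcal C\}$ and its inner set is $\mathcal I_{\mathcal C}=\mathcal C\setminus\mathcal B_{\mathcal C}$; for a cluster $\mathcal C_g$ write $\mathcal B_g,\mathcal I_g$. Cluster tree: $\mathcal T$ is a rooted binary tree of clusters with root $\mathcal M$, each non-leaf cluster the disjoint union of its two children. For a leaf $\mathcal C_r$, let $r=a_0,\dots,a_d$ be the path to the root and $b_k$ the sibling of $a_k$. The augmented tree $\mathcal T_r^+$ has root $\mathcal C_{-r}=\mathcal M\setminus\mathcal C_r$; for $0\le k\le d-2$,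 $\mathcal C_{-a_k}=\mathcal M\setminus\mathcal C_{a_k}$ has children $\mathcal C_{b_k}$ and $\mathcal C_{-a_{k+1}}$, where $\mathcal C_{-a_{d-1}}$ is identified with $\mathcal C_{b_{d-1}}$ (equal sets); each basic cluster $\mathcal C_{b_k}$ carries its subtree from $\mathcal T$. Private inner nodes: $\mathcal S_g=\mathcal I_g$ for a leaf $g$ of $\mathcal T_r^+$, and $\mathcal S_g=\mathcal I_g\setminus(\mathcal I_i\cup\mathcal I_j)$ if $g$ has children $i,j$. Consistent ordering: a total order $g_1,\dots,g_m$ of the nodes of $\mathcal T_r^+$ with every node after all its descendants. Elimination: $\mathbf A_{g_1}=\mathbf A$; for each $g$, $\mathcal L_g=\mathbf A_g(\mathcal B_g,\mathcal S_g)\mathbf A_g(\mathcal S_g,\mathcal S_g)^{-1}$, $\mathbf L_g$ is the identity on $\mathcal M$ except $\mathbf L_g(\mathcal B_g,\mathcal S_g)=\mathcal L_g$, $\mathbf A_{g+}=\mathbf L_g^{-1}\mathbf A_g$, and $\mathbf A_{g_{t+1}}=\mathbf A_{g_t+}$ (block Gaussian elimination of the columns $\mathcal S_g$). *)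

theory Defs
  imports Complex_Main
begin

text \<open>Matrices indexed by the mesh are functions of type 'a => 'a => real; only the
entries with indices in the relevant finite index sets are ever used.\<close>

type_synonym 'a mat = "'a \<Rightarrow> 'a \<Rightarrow> real"

definition mat_mult_on :: "'a set \<Rightarrow> 'a mat \<Rightarrow> 'a mat \<Rightarrow> 'a mat" where
  "mat_mult_on K X Y = (\<lambda>i j. \<Sum>k\<in>K. X i k * Y k j)"

definition mat_inv_on :: "'a set \<Rightarrow> 'a mat \<Rightarrow> 'a mat" where
  "mat_inv_on K X = (SOME Y.
      (\<forall>i\<in>K. \<forall>j\<in>K. (\<Sum>k\<in>K. X i k * Y k j) = (if i = j then 1 else 0)) \<and>
      (\<forall>i\<in>K. \<forall>j\<in>K. (\<Sum>k\<in>K. Y i k * X k j) = (if i = j then 1 else 0)))"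

definition pos_def_on :: "'a set \<Rightarrow> 'a mat \<Rightarrow> bool" where
  "pos_def_on K X \<longleftrightarrow>
     (\<forall>i\<in>K. \<forall>j\<in>K. X i j = X j i) \<and>
     (\<forall>x :: 'a \<Rightarrow> real. (\<exists>i\<in>K. x i \<noteq> 0) \<longrightarrow> (\<Sum>i\<in>K. \<Sum>j\<in>K. x i * X i j * x j) > 0)"

definition bnd :: "'a set \<Rightarrow> 'a mat \<Rightarrow> 'a set \<Rightarrow> 'a set" where
  "bnd M A C = {i \<in> C. \<exists>j \<in> M - C. A i j \<noteq> 0}"

definition inner :: "'a set \<Rightarrow> 'a mat \<Rightarrow> 'a set \<Rightarrow> 'a set" where
  "inner M A C = C - bnd M A C"

datatype 'a ctree = CLeaf "'a set" | CNode "'a set" "'a ctree" "'a ctree"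

fun cl :: "'a ctree \<Rightarrow> 'a set" where
  "cl (CLeaf C) = C"
| "cl (CNode C l r) = C"

fun wf_ctree :: "'a ctree \<Rightarrow> bool" where
  "wf_ctree (CLeaf C) = True"
| "wf_ctree (CNode C l r) =
     (cl l \<inter> cl r = {} \<and> C = cl l \<union> cl r \<and> wf_ctree l \<and> wf_ctree r)"

definition cluster_tree :: "'a set \<Rightarrow> 'a ctree \<Rightarrow> bool" where
  "cluster_tree M T \<longleftrightarrow> wf_ctree T \<and> cl T = M"

text \<open>Nodes are addressed by paths from the root (False = first child, True = second child).\<close>
fun sub :: "'a ctree \<Rightarrow> bool list \<Rightarrow> 'a ctree option" where
  "sub t [] = Some t"
| "sub (CLeaf C) (c # q) = None"
| "sub (CNode C l r) (c # q) = sub (if c then r else l) q"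

definition nodes :: "'a ctree \<Rightarrow> bool list set" where
  "nodes t = {p. sub t p \<noteq> None}"

definition is_leaf_path :: "'a ctree \<Rightarrow> bool list \<Rightarrow> bool" where
  "is_leaf_path t p \<longleftrightarrow> (\<exists>C. sub t p = Some (CLeaf C))"

fun child :: "bool \<Rightarrow> 'a ctree \<Rightarrow> 'a ctree" where
  "child c (CNode C l r) = (if c then r else l)"
| "child c (CLeaf C) = CLeaf C"

text \<open>Augmented tree. aug_acc M t q O: t is the current node a_k on the path to the leaf
(remaining path q), O is the already built tree with cluster M - C_{a_k}.
The node C_{-a_{k+1}} = M - C_{a_{k+1}} gets the children C_{b_{k+1}}... more precisely:
when descending from t to its child a = child c t with sibling s = child (\<not>c) t,
the new node M - C_a has children s (basic cluster with its subtree of T) and O.\<close>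
fun aug_acc :: "'a set \<Rightarrow> 'a ctree \<Rightarrow> bool list \<Rightarrow> 'a ctree \<Rightarrow> 'a ctree" where
  "aug_acc M t [] Ot = Ot"
| "aug_acc M t (c # q) Ot =
     aug_acc M (child c t) q (CNode (M - cl (child c t)) (child (\<not> c) t) Ot)"

text \<open>Augmented tree T_r^+ for the leaf reached by path p. At the top level the node
C_{-a_{d-1}} is identified with the sibling subtree C_{b_{d-1}}. (For the degenerate
case p = [] we take the single node M - C_r.)\<close>
fun aug :: "'a set \<Rightarrow> 'a ctree \<Rightarrow> bool list \<Rightarrow> 'a ctree" where
  "aug M T [] = CLeaf (M - cl T)"
| "aug M T (c # q) = aug_acc M (child c T) q (child (\<not> c) T)"

definition consistent_ordering :: "'a ctree \<Rightarrow> bool list list \<Rightarrow> bool" where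
  "consistent_ordering U gs \<longleftrightarrow>
     distinct gs \<and> set gs = nodes U \<and>
     (\<forall>i < length gs. \<forall>j < length gs. (\<exists>x. x \<noteq> [] \<and> gs ! j = gs ! i @ x) \<longrightarrow> j < i)"

definition Cg :: "'a ctree \<Rightarrow> bool list \<Rightarrow> 'a set" where
  "Cg U g = cl (the (sub U g))"

definition Bg :: "'a set \<Rightarrow> 'a mat \<Rightarrow> 'a ctree \<Rightarrow> bool list \<Rightarrow> 'a set" where
  "Bg M A U g = bnd M A (Cg U g)"

definition Ig :: "'a set \<Rightarrow> 'a mat \<Rightarrow> 'a ctree \<Rightarrow> bool list \<Rightarrow> 'a set" where
  "Ig M A U g = inner M A (Cg U g)"

definition Sg :: "'a set \<Rightarrow> 'a mat \<Rightarrow> 'a ctree \<Rightarrow> bool list \<Rightarrow> 'a set" where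
  "Sg M A U g = (if is_leaf_path U g then Ig M A U g
                 else Ig M A U g - (Ig M A U (g @ [False]) \<union> Ig M A U (g @ [True])))"

text \<open>One elimination step at node g, applied to the current matrix X = A_g
(A is the original matrix, used for boundary sets).\<close>
definition elim_step :: "'a set \<Rightarrow> 'a mat \<Rightarrow> 'a ctree \<Rightarrow> 'a mat \<Rightarrow> bool list \<Rightarrow> 'a mat" where
  "elim_step M A U X g =
     (let B = Bg M A U g; S = Sg M A U g;
          Lc = mat_mult_on S X (mat_inv_on S X);
          L = (\<lambda>i j. if i \<in> B \<and> j \<in> S then Lc i j else (if i = j then 1 else 0))
      in mat_mult_on M (mat_inv_on M L) X)"

text \<open>A_{g_{t+1}} for the ordering gs (t counted from 0: A_{g_1} = A).\<close>
definition A_at :: "'a set \<Rightarrow> 'a mat \<Rightarrow> 'a ctree \<Rightarrow> bool list list \<Rightarrow> nat \<Rightarrow> 'a mat" where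
  "A_at M A U gs t = foldl (elim_step M A U) A (take t gs)"

definition schur_U :: "'a set \<Rightarrow> 'a mat \<Rightarrow> 'a ctree \<Rightarrow> 'a mat \<Rightarrow> bool list \<Rightarrow> 'a mat" where
  "schur_U M A U X g =
     (let S = Sg M A U g
      in (\<lambda>i j. X i j - (\<Sum>k\<in>S. \<Sum>l\<in>S. X i k * mat_inv_on S X k l * X l j)))"

end

theory Submission
  imports Defs
begin

lemma if01_mult[simp]: "(if P then 1 else 0) * (y::real) = (if P then y else 0)"
  "y * (if P then 1 else 0) = (if P then y else 0)" by auto

lemma delta_sum1[simp]:
  "finite K \<Longrightarrow> (\<Sum>k\<in>K. (if i = k then 1 else 0) * f k) = (if i \<in> K then f i else (0::real))"
proof -
  assume "finite K"
  have "(\<Sum>k\<in>K. (if i = k then 1 else 0) * f k) = (\<Sum>k\<in>K. (if i = k then f k else 0))"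
    by (rule sum.cong) auto
  then show ?thesis using \<open>finite K\<close> by simp
qed

lemma delta_sum2[simp]:
  "finite K \<Longrightarrow> (\<Sum>k\<in>K. f k * (if k = j then 1 else 0)) = (if j \<in> K then f j else (0::real))"
proof -
  assume "finite K"
  have "(\<Sum>k\<in>K. f k * (if k = j then 1 else 0)) = (\<Sum>k\<in>K. (if k = j then f k else 0))"
    by (rule sum.cong) auto
  then show ?thesis using \<open>finite K\<close> by simp
qed

definition is_inv :: "'a set \<Rightarrow> 'a mat \<Rightarrow> 'a mat \<Rightarrow> bool" where
  "is_inv K X Y \<longleftrightarrow>
      (\<forall>i\<in>K. \<forall>j\<in>K. (\<Sum>k\<in>K. X i k * Y k j) = (if i = j then 1 else 0)) \<and>
      (\<forall>i\<in>K. \<forall>j\<in>K. (\<Sum>k\<in>K. Y i k * X k j) = (if i = j then 1 else 0))"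

lemma mat_inv_on_is_inv: "is_inv K X Y \<Longrightarrow> is_inv K X (mat_inv_on K X)"
proof -
  assume h: "is_inv K X Y"
  have "mat_inv_on K X = (SOME Y. is_inv K X Y)" unfolding mat_inv_on_def is_inv_def by simp
  then show ?thesis using someI[of "\<lambda>Y. is_inv K X Y", OF h] by simp
qed

lemma sum_assoc3:
  fixes Y X Z :: "'a mat"
  shows "(\<Sum>k\<in>K. Y i k * (\<Sum>l\<in>L. X k l * Z l j)) = (\<Sum>l\<in>L. (\<Sum>k\<in>K. Y i k * X k l) * Z l j)"
  by (simp add: sum_distrib_left sum_distrib_right mult.assoc sum.swap[of _ K])

lemma inv_unique:
  fixes X Y Z :: "'a mat"
  assumes K: "finite K"
    and left: "\<forall>i\<in>K. \<forall>j\<in>K. (\<Sum>k\<in>K. Y i k * X k j) = (if i = j then 1 else 0)"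
    and right: "\<forall>i\<in>K. \<forall>j\<in>K. (\<Sum>k\<in>K. X i k * Z k j) = (if i = j then 1 else 0)"
    and ij: "i \<in> K" "j \<in> K"
  shows "Y i j = Z i j"
proof -
  have "Y i j = (\<Sum>k\<in>K. Y i k * (if k = j then 1 else 0))" using K ij by simp
  also have "\<dots> = (\<Sum>k\<in>K. Y i k * (\<Sum>l\<in>K. X k l * Z l j))"
    by (rule sum.cong) (use right ij in auto)
  also have "\<dots> = (\<Sum>l\<in>K. (\<Sum>k\<in>K. Y i k * X k l) * Z l j)" by (rule sum_assoc3)
  also have "\<dots> = (\<Sum>l\<in>K. (if i = l then 1 else 0) * Z l j)"
    by (rule sum.cong) (use left ij in auto)
  also have "\<dots> = Z i j" using K ij by simp
  finally show ?thesis .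
qed

lemma pos_def_sym: "pos_def_on K Y \<Longrightarrow> i \<in> K \<Longrightarrow> j \<in> K \<Longrightarrow> Y i j = Y j i"
  unfolding pos_def_on_def by blast

lemma pos_def_pos: "pos_def_on K Y \<Longrightarrow> i \<in> K \<Longrightarrow> x i \<noteq> 0 \<Longrightarrow> (\<Sum>i\<in>K. \<Sum>j\<in>K. x i * Y i j * x j) > 0"
  unfolding pos_def_on_def by blast

lemma pd_diag: "pos_def_on K Y \<Longrightarrow> finite K \<Longrightarrow> a \<in> K \<Longrightarrow> Y a a > 0"
proof -
  assume pd: "pos_def_on K Y" and K: "finite K" and a: "a \<in> K"
  let ?x = "\<lambda>k. if k = a then 1 else (0::real)"
  have "(\<Sum>i\<in>K. \<Sum>j\<in>K. ?x i * Y i j * ?x j) > 0" by (rule pos_def_pos[OF pd a]) simp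
  moreover have "(\<Sum>i\<in>K. \<Sum>j\<in>K. ?x i * Y i j * ?x j) = Y a a"
  proof -
    have "(\<Sum>i\<in>K. \<Sum>j\<in>K. ?x i * Y i j * ?x j) = (\<Sum>i\<in>K. if i = a then Y a a else 0)"
      by (rule sum.cong) (use K a in auto)
    then show ?thesis using K a by simp
  qed
  ultimately show ?thesis by simp
qed

lemma pd_schur1:
  fixes Y :: "'a mat"
  assumes K: "finite K" and a: "a \<notin> K" and pd: "pos_def_on (insert a K) Y"
  shows "pos_def_on K (\<lambda>i j. Y i j - Y i a * Y a j / Y a a)"
proof -
  have Yaa: "Y a a > 0" using pd_diag[OF pd] K by simp
  have sym: "\<And>i j. i \<in> insert a K \<Longrightarrow> j \<in> insert a K \<Longrightarrow> Y i j = Y j i"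
    using pos_def_sym[OF pd] by blast
  show ?thesis unfolding pos_def_on_def
  proof (intro conjI allI impI ballI)
    fix i j assume "i \<in> K" "j \<in> K"
    then show "Y i j - Y i a * Y a j / Y a a = Y j i - Y j a * Y a i / Y a a"
      using sym[of i j] sym[of i a] sym[of a j] by simp
  next
    fix x :: "'a \<Rightarrow> real" assume "\<exists>i\<in>K. x i \<noteq> 0"
    then obtain i0 where i0: "i0 \<in> K" "x i0 \<noteq> 0" by blast
    define c where "c = (\<Sum>k\<in>K. Y a k * x k)"
    define va where "va = - c / Y a a"
    define v where "v = x(a := va)"
    define q where "q = (\<Sum>i\<in>K. \<Sum>j\<in>K. x i * Y i j * x j)"
    have vK: "\<And>i. i \<in> K \<Longrightarrow> v i = x i" using a unfolding v_def by auto
    have va: "v a = va" unfolding v_def by simp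
    have cK: "(\<Sum>i\<in>K. x i * Y i a) = c" unfolding c_def
      by (rule sum.cong) (use sym in auto)
    have "(\<Sum>i\<in>insert a K. \<Sum>j\<in>insert a K. v i * Y i j * v j)
        = (\<Sum>i\<in>insert a K. v i * Y i a * va + (\<Sum>j\<in>K. v i * Y i j * x j))"
      by (rule sum.cong) (use K a vK va in auto)
    also have "\<dots> = (va * Y a a * va + (\<Sum>j\<in>K. va * Y a j * x j)) +
                    (\<Sum>i\<in>K. x i * Y i a * va + (\<Sum>j\<in>K. x i * Y i j * x j))"
      using K a vK va by simp
    also have "\<dots> = va * Y a a * va + va * c + va * c + q"
    proof -
      have 1: "(\<Sum>j\<in>K. va * Y a j * x j) = va * c" unfolding c_def
        by (simp add: sum_distrib_left mult.assoc)
      have 2: "(\<Sum>i\<in>K. x i * Y i a * va) = va * c" using cK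
        by (simp add: sum_distrib_right[symmetric])
      show ?thesis using 1 2 by (simp add: sum.distrib q_def)
    qed
    also have "\<dots> = q - c * c / Y a a" unfolding va_def using Yaa
      by (simp add: field_simps)
    finally have Qv: "(\<Sum>i\<in>insert a K. \<Sum>j\<in>insert a K. v i * Y i j * v j) = q - c * c / Y a a" .
    have "(\<Sum>i\<in>insert a K. \<Sum>j\<in>insert a K. v i * Y i j * v j) > 0"
      by (rule pos_def_pos[OF pd, of i0]) (use i0 vK in auto)
    moreover have "(\<Sum>i\<in>K. \<Sum>j\<in>K. x i * (Y i j - Y i a * Y a j / Y a a) * x j) = q - c * c / Y a a"
    proof -
      have "(\<Sum>i\<in>K. \<Sum>j\<in>K. x i * (Y i j - Y i a * Y a j / Y a a) * x j)
          = (\<Sum>i\<in>K. \<Sum>j\<in>K. x i * Y i j * x j) - (\<Sum>i\<in>K. \<Sum>j\<in>K. (x i * Y i a) * (Y a j * x j) / Y a a)"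
        by (simp add: sum_subtractf[symmetric] algebra_simps)
      also have "(\<Sum>i\<in>K. \<Sum>j\<in>K. (x i * Y i a) * (Y a j * x j) / Y a a) = (\<Sum>i\<in>K. x i * Y i a) * (\<Sum>j\<in>K. Y a j * x j) / Y a a"
        by (simp add: sum_divide_distrib[symmetric] sum_product)
      finally show ?thesis using cK unfolding q_def c_def by simp
    qed
    ultimately show "(\<Sum>i\<in>K. \<Sum>j\<in>K. x i * (Y i j - Y i a * Y a j / Y a a) * x j) > 0"
      using Qv by simp
  qed
qed

lemma pd_solve:
  fixes Y :: "'a mat"
  assumes "finite K" "pos_def_on K Y"
  shows "\<exists>w. \<forall>i\<in>K. (\<Sum>k\<in>K. Y i k * w k) = b i"
  using assms
proof (induction K arbitrary: Y b rule: finite_induct)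
  case empty
  then show ?case by simp
next
  case (insert a K)
  have Yaa: "Y a a > 0" using pd_diag[OF insert.prems] insert.hyps by simp
  define Y' where "Y' = (\<lambda>i j. Y i j - Y i a * Y a j / Y a a)"
  have pd': "pos_def_on K Y'" unfolding Y'_def by (rule pd_schur1) (use insert in auto)
  obtain w' where w': "\<forall>i\<in>K. (\<Sum>k\<in>K. Y' i k * w' k) = b i - Y i a * b a / Y a a"
    using insert.IH[OF pd', of "\<lambda>i. b i - Y i a * b a / Y a a"] by blast
  define S where "S = (\<Sum>k\<in>K. Y a k * w' k)"
  define wa where "wa = (b a - S) / Y a a"
  define w where "w = w'(a := wa)"
  have wK: "\<And>k. k \<in> K \<Longrightarrow> w k = w' k" using insert.hyps unfolding w_def by auto
  have sumw: "\<And>i. (\<Sum>k\<in>insert a K. Y i k * w k) = Y i a * wa + (\<Sum>k\<in>K. Y i k * w' k)"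
  proof -
    fix i
    have "(\<Sum>k\<in>K. Y i k * w k) = (\<Sum>k\<in>K. Y i k * w' k)" by (rule sum.cong) (use wK in auto)
    then show "(\<Sum>k\<in>insert a K. Y i k * w k) = Y i a * wa + (\<Sum>k\<in>K. Y i k * w' k)"
      using insert.hyps by (simp add: w_def)
  qed
  show ?case
  proof (intro exI ballI)
    fix i assume i: "i \<in> insert a K"
    show "(\<Sum>k\<in>insert a K. Y i k * w k) = b i"
    proof (cases "i = a")
      case True
      then show ?thesis using sumw[of a] Yaa unfolding wa_def S_def by (simp add: field_simps)
    next
      case False
      then have iK: "i \<in> K" using i by simp
      have "(\<Sum>k\<in>K. Y' i k * w' k) = (\<Sum>k\<in>K. Y i k * w' k) - Y i a / Y a a * S"
        unfolding Y'_def S_def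
        by (simp add: algebra_simps sum_subtractf sum_distrib_left sum_divide_distrib)
      then have "(\<Sum>k\<in>K. Y i k * w' k) = b i - Y i a * b a / Y a a + Y i a / Y a a * S"
        using w' iK by simp
      then show ?thesis using sumw[of i] Yaa unfolding wa_def by (simp add: field_simps)
    qed
  qed
qed

lemma pd_inv:
  fixes Y :: "'a mat"
  assumes K: "finite K" and pd: "pos_def_on K Y"
  shows "is_inv K Y (mat_inv_on K Y) \<and> (\<forall>i\<in>K. \<forall>j\<in>K. mat_inv_on K Y i j = mat_inv_on K Y j i)"
proof -
  have sym: "\<And>i j. i \<in> K \<Longrightarrow> j \<in> K \<Longrightarrow> Y i j = Y j i" using pos_def_sym[OF pd] by blast
  define W where "W = (\<lambda>k j. (SOME w. \<forall>i\<in>K. (\<Sum>k\<in>K. Y i k * w k) = (if i = j then 1 else 0)) k)"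
  have right: "\<forall>i\<in>K. \<forall>j\<in>K. (\<Sum>k\<in>K. Y i k * W k j) = (if i = j then 1 else 0)"
  proof (intro ballI)
    fix i j assume "i \<in> K" "j \<in> K"
    have "\<exists>w. \<forall>i\<in>K. (\<Sum>k\<in>K. Y i k * w k) = (if i = j then 1 else 0)"
      by (rule pd_solve[OF K pd])
    from someI_ex[OF this] \<open>i \<in> K\<close>
    show "(\<Sum>k\<in>K. Y i k * W k j) = (if i = j then 1 else 0)" unfolding W_def by blast
  qed
  have left: "\<forall>i\<in>K. \<forall>j\<in>K. (\<Sum>k\<in>K. W k i * Y k j) = (if i = j then 1 else 0)"
  proof (intro ballI)
    fix i j assume ij: "i \<in> K" "j \<in> K"
    have "(\<Sum>k\<in>K. W k i * Y k j) = (\<Sum>k\<in>K. Y j k * W k i)"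
      by (rule sum.cong) (use sym ij in auto)
    then show "(\<Sum>k\<in>K. W k i * Y k j) = (if i = j then 1 else 0)" using right ij by auto
  qed
  have eq: "\<And>i j. i \<in> K \<Longrightarrow> j \<in> K \<Longrightarrow> W j i = W i j"
    using inv_unique[OF K _ right, of "\<lambda>i k. W k i"] left by blast
  have left2: "\<forall>i\<in>K. \<forall>j\<in>K. (\<Sum>k\<in>K. W i k * Y k j) = (if i = j then 1 else 0)"
  proof (intro ballI)
    fix i j assume ij: "i \<in> K" "j \<in> K"
    have "(\<Sum>k\<in>K. W i k * Y k j) = (\<Sum>k\<in>K. W k i * Y k j)"
      by (rule sum.cong) (use eq ij in auto)
    then show "(\<Sum>k\<in>K. W i k * Y k j) = (if i = j then 1 else 0)" using left ij by auto
  qed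
  have inv: "is_inv K Y (mat_inv_on K Y)"
    by (rule mat_inv_on_is_inv[of K Y W]) (use right left2 in \<open>simp add: is_inv_def\<close>)
  let ?Z = "mat_inv_on K Y"
  have zl: "\<forall>i\<in>K. \<forall>j\<in>K. (\<Sum>k\<in>K. ?Z i k * Y k j) = (if i = j then 1 else 0)"
    using inv unfolding is_inv_def by blast
  have zr: "\<forall>i\<in>K. \<forall>j\<in>K. (\<Sum>k\<in>K. Y i k * ?Z j k) = (if i = j then 1 else 0)"
  proof (intro ballI)
    fix i j assume ij: "i \<in> K" "j \<in> K"
    have "(\<Sum>k\<in>K. Y i k * ?Z j k) = (\<Sum>k\<in>K. ?Z j k * Y k i)"
      by (rule sum.cong) (use sym ij in auto)
    then show "(\<Sum>k\<in>K. Y i k * ?Z j k) = (if i = j then 1 else 0)" using zl ij by auto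
  qed
  have "\<forall>i\<in>K. \<forall>j\<in>K. ?Z i j = ?Z j i"
    using inv_unique[OF K zl zr] by blast
  with inv show ?thesis by blast
qed

lemma sum4_swap:
  "(\<Sum>i\<in>I. \<Sum>j\<in>J. \<Sum>k\<in>K. \<Sum>l\<in>L. f i j k l) = (\<Sum>k\<in>K. \<Sum>l\<in>L. \<Sum>i\<in>I. \<Sum>j\<in>J. (f i j k l :: real))"
proof -
  have "(\<Sum>i\<in>I. \<Sum>j\<in>J. \<Sum>k\<in>K. \<Sum>l\<in>L. f i j k l) = (\<Sum>i\<in>I. \<Sum>k\<in>K. \<Sum>j\<in>J. \<Sum>l\<in>L. f i j k l)"
    by (rule sum.cong[OF refl], rule sum.swap)
  also have "\<dots> = (\<Sum>i\<in>I. \<Sum>k\<in>K. \<Sum>l\<in>L. \<Sum>j\<in>J. f i j k l)"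
    by (rule sum.cong[OF refl], rule sum.cong[OF refl], rule sum.swap)
  also have "\<dots> = (\<Sum>k\<in>K. \<Sum>i\<in>I. \<Sum>l\<in>L. \<Sum>j\<in>J. f i j k l)"
    by (rule sum.swap)
  also have "\<dots> = (\<Sum>k\<in>K. \<Sum>l\<in>L. \<Sum>i\<in>I. \<Sum>j\<in>J. f i j k l)"
    by (rule sum.cong[OF refl], rule sum.swap)
  finally show ?thesis .
qed

lemma rep_quad:
  fixes X P A :: "'a mat"
  assumes M: "finite M" and EM: "E \<subseteq> M"
    and a: "\<forall>i\<in>M - E. \<forall>k\<in>M - E. P i k = (if i = k then 1 else 0)"
    and b: "\<forall>i\<in>M - E. \<forall>e\<in>E. X i e = 0"
    and c: "\<forall>i\<in>M - E. \<forall>j\<in>M. X i j = (\<Sum>k\<in>M. P i k * A k j)"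
    and i: "i \<in> M - E" and j: "j \<in> M - E"
  shows "X i j = (\<Sum>k\<in>M. \<Sum>l\<in>M. P i k * A k l * P j l)"
proof -
  have split: "M = (M - E) \<union> E" using EM by blast
  have fE: "finite E" using M EM finite_subset by blast
  have "(\<Sum>l\<in>M. X i l * P j l) = (\<Sum>l\<in>M - E. X i l * P j l) + (\<Sum>l\<in>E. X i l * P j l)"
    by (subst split, rule sum.union_disjoint) (use M fE in auto)
  also have "(\<Sum>l\<in>E. X i l * P j l) = 0" using b i by simp
  also have "(\<Sum>l\<in>M - E. X i l * P j l) = (\<Sum>l\<in>M - E. X i l * (if l = j then 1 else 0))"
    by (rule sum.cong) (use a j in auto)
  also have "\<dots> = X i j" using M j by simp
  finally have 1: "(\<Sum>l\<in>M. X i l * P j l) = X i j" by simp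
  have "(\<Sum>l\<in>M. X i l * P j l) = (\<Sum>l\<in>M. (\<Sum>k\<in>M. P i k * A k l) * P j l)"
    by (rule sum.cong) (use c i in auto)
  also have "\<dots> = (\<Sum>l\<in>M. \<Sum>k\<in>M. P i k * A k l * P j l)"
    by (simp add: sum_distrib_right)
  also have "\<dots> = (\<Sum>k\<in>M. \<Sum>l\<in>M. P i k * A k l * P j l)"
    by (rule sum.swap)
  finally show ?thesis using 1 by simp
qed

lemma rep_sym:
  fixes X P A :: "'a mat"
  assumes M: "finite M" and EM: "E \<subseteq> M" and pdA: "pos_def_on M A"
    and a: "\<forall>i\<in>M - E. \<forall>k\<in>M - E. P i k = (if i = k then 1 else 0)"
    and b: "\<forall>i\<in>M - E. \<forall>e\<in>E. X i e = 0"
    and c: "\<forall>i\<in>M - E. \<forall>j\<in>M. X i j = (\<Sum>k\<in>M. P i k * A k j)"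
    and i: "i \<in> M - E" and j: "j \<in> M - E"
  shows "X i j = X j i"
proof -
  have "X i j = (\<Sum>k\<in>M. \<Sum>l\<in>M. P i k * A k l * P j l)" by (rule rep_quad[OF M EM a b c i j])
  also have "\<dots> = (\<Sum>l\<in>M. \<Sum>k\<in>M. P i k * A k l * P j l)" by (rule sum.swap)
  also have "\<dots> = (\<Sum>l\<in>M. \<Sum>k\<in>M. P j l * A l k * P i k)"
    by (intro sum.cong refl) (use pos_def_sym[OF pdA] in auto)
  also have "\<dots> = X j i" by (rule rep_quad[OF M EM a b c j i, symmetric])
  finally show ?thesis .
qed

lemma rep_pd:
  fixes X P A :: "'a mat"
  assumes M: "finite M" and EM: "E \<subseteq> M" and pdA: "pos_def_on M A"
    and a: "\<forall>i\<in>M - E. \<forall>k\<in>M - E. P i k = (if i = k then 1 else 0)"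
    and b: "\<forall>i\<in>M - E. \<forall>e\<in>E. X i e = 0"
    and c: "\<forall>i\<in>M - E. \<forall>j\<in>M. X i j = (\<Sum>k\<in>M. P i k * A k j)"
    and K: "K \<subseteq> M - E"
  shows "pos_def_on K X"
  unfolding pos_def_on_def
proof (intro conjI ballI allI impI)
  fix i j assume "i \<in> K" "j \<in> K"
  then show "X i j = X j i" using rep_sym[OF M EM pdA a b c] K by blast
next
  fix x :: "'a \<Rightarrow> real" assume "\<exists>i\<in>K. x i \<noteq> 0"
  then obtain i0 where i0: "i0 \<in> K" "x i0 \<noteq> 0" by blast
  have fK: "finite K" using K M finite_subset by blast
  define w where "w = (\<lambda>k. \<Sum>i\<in>K. x i * P i k)"
  have "(\<Sum>i\<in>K. \<Sum>j\<in>K. x i * X i j * x j) = (\<Sum>i\<in>K. \<Sum>j\<in>K. x i * (\<Sum>k\<in>M. \<Sum>l\<in>M. P i k * A k l * P j l) * x j)"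
    by (intro sum.cong refl) (use rep_quad[OF M EM a b c] K in auto)
  also have "\<dots> = (\<Sum>i\<in>K. \<Sum>j\<in>K. \<Sum>k\<in>M. \<Sum>l\<in>M. (x i * P i k) * A k l * (x j * P j l))"
    by (simp add: sum_distrib_left sum_distrib_right mult_ac)
  also have "\<dots> = (\<Sum>k\<in>M. \<Sum>l\<in>M. \<Sum>i\<in>K. \<Sum>j\<in>K. (x i * P i k) * A k l * (x j * P j l))"
    by (rule sum4_swap)
  also have "\<dots> = (\<Sum>k\<in>M. \<Sum>l\<in>M. w k * A k l * w l)"
    unfolding w_def by (simp add: sum_distrib_left sum_distrib_right mult_ac)
  finally have eq: "(\<Sum>i\<in>K. \<Sum>j\<in>K. x i * X i j * x j) = (\<Sum>k\<in>M. \<Sum>l\<in>M. w k * A k l * w l)" .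
  have "w i0 = (\<Sum>i\<in>K. x i * (if i = i0 then 1 else 0))"
    unfolding w_def
  proof (intro sum.cong refl)
    fix i assume "i \<in> K"
    then have "P i i0 = (if i = i0 then 1 else 0)" using a K i0 by blast
    then show "x i * P i i0 = x i * (if i = i0 then 1 else 0)" by simp
  qed
  also have "\<dots> = x i0" using fK i0 by simp
  finally have "w i0 \<noteq> 0" using i0 by simp
  moreover have "i0 \<in> M" using i0 K by blast
  ultimately have "(\<Sum>k\<in>M. \<Sum>l\<in>M. w k * A k l * w l) > 0" using pos_def_pos[OF pdA] by blast
  then show "(\<Sum>i\<in>K. \<Sum>j\<in>K. x i * X i j * x j) > 0" using eq by simp
qed

lemma elim_formula:
  fixes X Lc :: "'a mat"
  assumes M: "finite M" and SM: "S \<subseteq> M" and BS: "B \<inter> S = {}" and i: "i \<in> M"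
  shows "mat_mult_on M (mat_inv_on M (\<lambda>i j. if i \<in> B \<and> j \<in> S then Lc i j else (if i = j then 1 else 0))) X i j
         = X i j - (if i \<in> B then (\<Sum>s\<in>S. Lc i s * X s j) else 0)"
proof -
  define N where "N = (\<lambda>i j. if i \<in> B \<and> j \<in> S then Lc i j else (0::real))"
  define L where "L = (\<lambda>i j. if i \<in> B \<and> j \<in> S then Lc i j else (if i = j then 1 else (0::real)))"
  define L' where "L' = (\<lambda>i j. (if i = j then 1 else 0) - N i j)"
  have Leq: "\<And>i j. L i j = (if i = j then 1 else 0) + N i j" unfolding L_def N_def using BS by auto
  have NN: "\<And>i k j. N i k * N k j = 0" unfolding N_def using BS by auto
  have NNs: "\<And>i j. (\<Sum>k\<in>M. N i k * N k j) = 0" by (rule sum.neutral) (use NN in blast)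
  have prod1: "\<And>i j. i \<in> M \<Longrightarrow> j \<in> M \<Longrightarrow> (\<Sum>k\<in>M. L i k * L' k j) = (if i = j then 1 else 0)"
  proof -
    fix i j assume ij: "i \<in> M" "j \<in> M"
    have "(\<Sum>k\<in>M. L i k * L' k j) = (\<Sum>k\<in>M. (if i = k then 1 else 0) * (if k = j then 1 else 0)
         - (if i = k then 1 else 0) * N k j + N i k * (if k = j then 1 else 0) - N i k * N k j)"
      unfolding Leq L'_def by (intro sum.cong refl) (simp add: algebra_simps)
    also have "\<dots> = (if i = j then 1 else 0) - N i j + N i j - 0"
      using M ij by (simp add: sum.distrib sum_subtractf NNs)
    finally show "(\<Sum>k\<in>M. L i k * L' k j) = (if i = j then 1 else 0)" by simp
  qed
  have prod2: "\<And>i j. i \<in> M \<Longrightarrow> j \<in> M \<Longrightarrow> (\<Sum>k\<in>M. L' i k * L k j) = (if i = j then 1 else 0)"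
  proof -
    fix i j assume ij: "i \<in> M" "j \<in> M"
    have "(\<Sum>k\<in>M. L' i k * L k j) = (\<Sum>k\<in>M. (if i = k then 1 else 0) * (if k = j then 1 else 0)
         + (if i = k then 1 else 0) * N k j - N i k * (if k = j then 1 else 0) - N i k * N k j)"
      unfolding Leq L'_def by (intro sum.cong refl) (simp add: algebra_simps)
    also have "\<dots> = (if i = j then 1 else 0) + N i j - N i j - 0"
      using M ij by (simp add: sum.distrib sum_subtractf NNs)
    finally show "(\<Sum>k\<in>M. L' i k * L k j) = (if i = j then 1 else 0)" by simp
  qed
  have isinv: "is_inv M L (mat_inv_on M L)"
    by (rule mat_inv_on_is_inv[of M L L']) (use prod1 prod2 in \<open>simp add: is_inv_def\<close>)
  have left: "\<forall>i\<in>M. \<forall>j\<in>M. (\<Sum>k\<in>M. mat_inv_on M L i k * L k j) = (if i = j then 1 else 0)"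
    using isinv unfolding is_inv_def by blast
  have eqinv: "\<And>k. k \<in> M \<Longrightarrow> mat_inv_on M L i k = L' i k"
    using inv_unique[OF M left, of L'] prod1 i by blast
  have "mat_mult_on M (mat_inv_on M L) X i j = (\<Sum>k\<in>M. L' i k * X k j)"
    unfolding mat_mult_on_def by (intro sum.cong refl) (use eqinv in auto)
  also have "\<dots> = (\<Sum>k\<in>M. (if i = k then 1 else 0) * X k j) - (\<Sum>k\<in>M. N i k * X k j)"
    unfolding L'_def by (simp add: algebra_simps sum_subtractf)
  also have "(\<Sum>k\<in>M. N i k * X k j) = (if i \<in> B then (\<Sum>s\<in>S. Lc i s * X s j) else 0)"
  proof -
    have "(\<Sum>k\<in>M. N i k * X k j) = (\<Sum>k\<in>M. if k \<in> S then (if i \<in> B then Lc i k * X k j else 0) else 0)"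
      unfolding N_def by (intro sum.cong refl) auto
    also have "\<dots> = (\<Sum>k\<in>S. (if i \<in> B then Lc i k * X k j else 0))"
      using M SM by (simp add: sum.If_cases Int_absorb1)
    finally show ?thesis by simp
  qed
  finally show ?thesis using M i unfolding L_def by simp
qed

lemma sub_append: "sub U (p @ q) = (case sub U p of None \<Rightarrow> None | Some s \<Rightarrow> sub s q)"
  by (induction U p rule: sub.induct) auto

lemma wf_sub: "wf_ctree U \<Longrightarrow> sub U p = Some s \<Longrightarrow> wf_ctree s \<and> cl s \<subseteq> cl U"
  by (induction U p rule: sub.induct) (auto split: if_splits)

lemma sub_disj:
  "wf_ctree U \<Longrightarrow> sub U p = Some s1 \<Longrightarrow> sub U q = Some s2 \<Longrightarrow> (\<forall>x. q \<noteq> p @ x) \<Longrightarrow>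
   (\<forall>x. p \<noteq> q @ x) \<Longrightarrow> cl s1 \<inter> cl s2 = {}"
proof (induction p arbitrary: U q)
  case Nil
  then show ?case by simp
next
  case (Cons a p')
  then obtain b q' where q: "q = b # q'" by (cases q) auto
  show ?case
  proof (cases U)
    case (CLeaf C)
    then show ?thesis using Cons.prems by simp
  next
    case (CNode C l r)
    show ?thesis
    proof (cases "a = b")
      case True
      have wfc: "wf_ctree (if a then r else l)" using Cons.prems CNode by auto
      show ?thesis
        by (rule Cons.IH[OF wfc, of q']) (use Cons.prems CNode q True in auto)
    next
      case False
      have 1: "cl s1 \<subseteq> cl (if a then r else l)"
        using wf_sub[of "if a then r else l" p' s1] Cons.prems CNode by auto
      have 2: "cl s2 \<subseteq> cl (if b then r else l)"
        using wf_sub[of "if b then r else l" q' s2] Cons.prems CNode q by auto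
      show ?thesis using 1 2 False Cons.prems(1) CNode by (cases a; cases b) auto
    qed
  qed
qed

lemma nodes_prefix: "d @ x \<in> nodes U \<Longrightarrow> d \<in> nodes U"
  unfolding nodes_def by (auto simp: sub_append split: option.splits)

lemma Cg_sub: "wf_ctree U \<Longrightarrow> d \<in> nodes U \<Longrightarrow> Cg U d \<subseteq> cl U"
  unfolding nodes_def Cg_def using wf_sub by fastforce

lemma Cg_prefix: "wf_ctree U \<Longrightarrow> d @ x \<in> nodes U \<Longrightarrow> Cg U (d @ x) \<subseteq> Cg U d"
proof -
  assume wf: "wf_ctree U" and n: "d @ x \<in> nodes U"
  then obtain s where s: "sub U d = Some s" unfolding nodes_def by (auto simp: sub_append split: option.splits)
  then obtain s' where s': "sub s x = Some s'" using n unfolding nodes_def by (auto simp: sub_append)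
  have "wf_ctree s" using wf_sub[OF wf s] by simp
  then have "cl s' \<subseteq> cl s" using wf_sub s' by blast
  then show ?thesis unfolding Cg_def using s s' by (simp add: sub_append)
qed

lemma Cg_laminar:
  assumes wf: "wf_ctree U" and d: "d \<in> nodes U" and d': "d' \<in> nodes U"
  shows "Cg U d \<inter> Cg U d' = {} \<or> Cg U d \<subseteq> Cg U d' \<or> Cg U d' \<subseteq> Cg U d"
proof (cases "\<exists>x. d' = d @ x")
  case True
  then show ?thesis using Cg_prefix[OF wf] d' by blast
next
  case False
  note F = False
  show ?thesis
  proof (cases "\<exists>x. d = d' @ x")
    case True
    then show ?thesis using Cg_prefix[OF wf] d by blast
  next
    case False
    obtain s1 s2 where "sub U d = Some s1" "sub U d' = Some s2" using d d' unfolding nodes_def by auto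
    then show ?thesis using sub_disj[OF wf, of d s1 d' s2] F False unfolding Cg_def by auto
  qed
qed

lemma inner_mono: "C \<subseteq> C' \<Longrightarrow> inner M A C \<subseteq> inner M A C'"
  unfolding inner_def bnd_def by blast

lemma Ig_mono: "Cg U d \<subseteq> Cg U d' \<Longrightarrow> Ig M A U d \<subseteq> Ig M A U d'"
  unfolding Ig_def by (rule inner_mono)

lemma Ig_Bg: "Ig M A U d \<inter> Bg M A U d = {}" "Ig M A U d \<subseteq> Cg U d" "Bg M A U d \<subseteq> Cg U d"
  unfolding Ig_def Bg_def inner_def bnd_def by auto

lemma Sg_Ig: "Sg M A U d \<subseteq> Ig M A U d"
  unfolding Sg_def by auto

lemma Ig_zero: "k \<in> Ig M A U d \<Longrightarrow> j \<in> M \<Longrightarrow> j \<notin> Cg U d \<Longrightarrow> A k j = 0"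
  unfolding Ig_def inner_def bnd_def by auto

lemma nonleaf:
  assumes "sub U d = Some (CNode C l r)"
  shows "\<not> is_leaf_path U d" "sub U (d @ [False]) = Some l" "sub U (d @ [True]) = Some r"
  using assms unfolding is_leaf_path_def by (auto simp: sub_append)

lemma Sg_desc:
  assumes wf: "wf_ctree U" and n: "d @ (c # x) \<in> nodes U"
  shows "Sg M A U d \<inter> Sg M A U (d @ (c # x)) = {}"
proof -
  obtain s where s: "sub U d = Some s" using n unfolding nodes_def by (auto simp: sub_append split: option.splits)
  then obtain C l r where sN: "s = CNode C l r" using n unfolding nodes_def
    by (cases s) (auto simp: sub_append)
  have nl: "\<not> is_leaf_path U d" using nonleaf s sN by blast
  have "Cg U ((d @ [c]) @ x) \<subseteq> Cg U (d @ [c])" by (rule Cg_prefix[OF wf]) (use n in simp)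
  then have "Ig M A U (d @ (c # x)) \<subseteq> Ig M A U (d @ [c])" using Ig_mono by fastforce
  then have "Sg M A U (d @ (c # x)) \<subseteq> Ig M A U (d @ [c])" using Sg_Ig[of M A U "d @ (c # x)"] by blast
  moreover have "Sg M A U d \<inter> Ig M A U (d @ [c]) = {}" using nl unfolding Sg_def by (cases c) auto
  ultimately show ?thesis by blast
qed

lemma Sg_disj:
  assumes wf: "wf_ctree U" and d: "d \<in> nodes U" and d': "d' \<in> nodes U" and ne: "d \<noteq> d'"
  shows "Sg M A U d \<inter> Sg M A U d' = {}"
proof (cases "\<exists>x. d' = d @ x")
  case True
  then obtain c x where "d' = d @ (c # x)" using ne by (metis append_Nil2 neq_Nil_conv)
  then show ?thesis using Sg_desc[OF wf] d' by blast
next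
  case F: False
  show ?thesis
  proof (cases "\<exists>x. d = d' @ x")
    case True
    then obtain c x where "d = d' @ (c # x)" using ne by (metis append_Nil2 neq_Nil_conv)
    then show ?thesis using Sg_desc[OF wf] d by blast
  next
    case False
    obtain s1 s2 where "sub U d = Some s1" "sub U d' = Some s2" using d d' unfolding nodes_def by auto
    then have "Cg U d \<inter> Cg U d' = {}" using sub_disj[OF wf, of d s1 d' s2] F False unfolding Cg_def by auto
    then show ?thesis using Sg_Ig[of M A U d] Sg_Ig[of M A U d'] Ig_Bg(2)[of M A U d] Ig_Bg(2)[of M A U d'] by blast
  qed
qed

lemma cover_mono: "(\<Union>f\<in>{f \<in> nodes U. \<exists>x. f = (e @ [c]) @ x}. Sg M A U f)
   \<subseteq> (\<Union>f\<in>{f \<in> nodes U. \<exists>x. f = e @ x}. Sg M A U f)"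
proof (rule UN_mono)
  show "{f \<in> nodes U. \<exists>x. f = (e @ [c]) @ x} \<subseteq> {f \<in> nodes U. \<exists>x. f = e @ x}"
  proof
    fix f assume "f \<in> {f \<in> nodes U. \<exists>x. f = (e @ [c]) @ x}"
    then obtain x where "f \<in> nodes U" "f = e @ (c # x)" by auto
    then show "f \<in> {f \<in> nodes U. \<exists>x. f = e @ x}" by blast
  qed
qed simp

lemma cover_self: "e \<in> nodes U \<Longrightarrow> Sg M A U e \<subseteq> (\<Union>f\<in>{f \<in> nodes U. \<exists>x. f = e @ x}. Sg M A U f)"
proof -
  assume "e \<in> nodes U"
  moreover have "e = e @ []" by simp
  ultimately have "e \<in> {f \<in> nodes U. \<exists>x. f = e @ x}" by blast
  then show ?thesis by (rule UN_upper)
qed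

lemma Ig_split: "\<not> is_leaf_path U e \<Longrightarrow> Ig M A U e \<subseteq> Sg M A U e \<union> Ig M A U (e@[False]) \<union> Ig M A U (e@[True])"
  unfolding Sg_def by (simp only: if_False) blast
lemma leaf_Sg: "sub U e = Some (CLeaf C) \<Longrightarrow> Sg M A U e = Ig M A U e"
  unfolding Sg_def is_leaf_path_def by simp

lemma subtree_cover:
  "sub U e = Some s \<Longrightarrow> Ig M A U e \<subseteq> (\<Union>f\<in>{f \<in> nodes U. \<exists>x. f = e @ x}. Sg M A U f)"
proof (induction s arbitrary: e)
  case (CLeaf C)
  have "Sg M A U e = Ig M A U e" by (rule leaf_Sg[OF CLeaf])
  moreover have "e \<in> nodes U" using CLeaf unfolding nodes_def by simp
  ultimately show ?case using cover_self[where e=e and U=U and M=M and A=A] by simp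
next
  case (CNode C l r)
  note nl = nonleaf[OF CNode.prems]
  have 1: "Ig M A U (e @ [False]) \<subseteq> (\<Union>f\<in>{f \<in> nodes U. \<exists>x. f = e @ x}. Sg M A U f)"
    using CNode.IH(1)[OF nl(2)] cover_mono[where U=U and e=e and c=False and M=M and A=A] by (rule order.trans)
  have 2: "Ig M A U (e @ [True]) \<subseteq> (\<Union>f\<in>{f \<in> nodes U. \<exists>x. f = e @ x}. Sg M A U f)"
    using CNode.IH(2)[OF nl(3)] cover_mono[where U=U and e=e and c=True and M=M and A=A] by (rule order.trans)
  have "e \<in> nodes U" using CNode.prems unfolding nodes_def by simp
  then have 3: "Sg M A U e \<subseteq> (\<Union>f\<in>{f \<in> nodes U. \<exists>x. f = e @ x}. Sg M A U f)"
    by (rule cover_self)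
  have "Ig M A U e \<subseteq> Sg M A U e \<union> Ig M A U (e @ [False]) \<union> Ig M A U (e @ [True])"
    by (rule Ig_split[OF nl(1)])
  then show ?case using 1 2 3 by blast
qed

lemma aug_acc_wf:
  "wf_ctree t \<Longrightarrow> wf_ctree Ot \<Longrightarrow> cl t \<subseteq> M \<Longrightarrow> cl Ot = M - cl t \<Longrightarrow> sub t q \<noteq> None \<Longrightarrow>
   wf_ctree (aug_acc M t q Ot) \<and> cl (aug_acc M t q Ot) \<subseteq> M"
proof (induction q arbitrary: t Ot)
  case Nil
  then show ?case by simp
next
  case (Cons c q)
  then obtain C l r where t: "t = CNode C l r" by (cases t) auto
  let ?a = "if c then r else l" and ?s = "if c then l else r"
  have ch: "child c t = ?a" "child (\<not> c) t = ?s" using t by auto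
  have wfO': "wf_ctree (CNode (M - cl ?a) ?s Ot)" using Cons.prems t by auto
  have "wf_ctree (aug_acc M ?a q (CNode (M - cl ?a) ?s Ot)) \<and> cl (aug_acc M ?a q (CNode (M - cl ?a) ?s Ot)) \<subseteq> M"
    by (rule Cons.IH) (use Cons.prems t wfO' in auto)
  then show ?case using ch by simp
qed

lemma aug_wf:
  assumes "cluster_tree M T" "is_leaf_path T p"
  shows "wf_ctree (aug M T p) \<and> cl (aug M T p) \<subseteq> M"
proof (cases p)
  case Nil
  then show ?thesis by simp
next
  case (Cons c q)
  obtain C0 where s: "sub T p = Some (CLeaf C0)" using assms(2) unfolding is_leaf_path_def by blast
  then obtain C l r where T: "T = CNode C l r" using Cons by (cases T) auto
  let ?a = "if c then r else l" and ?s = "if c then l else r"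
  have ch: "child c T = ?a" "child (\<not> c) T = ?s" using T by auto
  have "wf_ctree (aug_acc M ?a q ?s) \<and> cl (aug_acc M ?a q ?s) \<subseteq> M"
    by (rule aug_acc_wf) (use assms T s Cons in \<open>auto simp: cluster_tree_def\<close>)
  then show ?thesis using ch Cons by simp
qed

locale setting =
  fixes M :: "'a set" and A :: "'a mat" and U :: "'a ctree" and gs :: "bool list list"
  assumes finM: "finite M" and pdA: "pos_def_on M A" and wfU: "wf_ctree U" and clU: "cl U \<subseteq> M"
    and co: "consistent_ordering U gs"
begin

definition E :: "nat \<Rightarrow> 'a set" where "E t = (\<Union>t'\<in>{..<t}. Sg M A U (gs ! t'))"

lemma dist: "distinct gs" and setgs: "set gs = nodes U"
  and ord: "\<And>i j x. i < length gs \<Longrightarrow> j < length gs \<Longrightarrow> x \<noteq> [] \<Longrightarrow> gs ! j = gs ! i @ x \<Longrightarrow> j < i"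
  using co unfolding consistent_ordering_def by blast+

lemma node_gs: "t < length gs \<Longrightarrow> gs ! t \<in> nodes U"
  using setgs nth_mem by blast

lemma Cg_M: "d \<in> nodes U \<Longrightarrow> Cg U d \<subseteq> M"
  using Cg_sub[OF wfU] clU by blast

lemma Sg_M: "d \<in> nodes U \<Longrightarrow> Sg M A U d \<subseteq> M"
  using Cg_M[of d] Sg_Ig[of M A U d] Ig_Bg(2)[of M A U d] by blast

lemma Bg_M: "d \<in> nodes U \<Longrightarrow> Bg M A U d \<subseteq> M"
  using Cg_M[of d] Ig_Bg(3)[of M A U d] by blast

lemma E_M: "t \<le> length gs \<Longrightarrow> E t \<subseteq> M"
  unfolding E_def
proof (rule UN_least)
  fix t' assume "t \<le> length gs" "t' \<in> {..<t}"
  then have "gs ! t' \<in> nodes U" using node_gs by simp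
  then show "Sg M A U (gs ! t') \<subseteq> M" by (rule Sg_M)
qed

lemma E_Suc: "E (Suc t) = E t \<union> Sg M A U (gs ! t)"
  unfolding E_def by (auto simp: lessThan_Suc)

lemma E0: "E 0 = {}" unfolding E_def by simp

lemma X_Suc: "t < length gs \<Longrightarrow> A_at M A U gs (Suc t) = elim_step M A U (A_at M A U gs t) (gs ! t)"
  unfolding A_at_def by (simp add: take_Suc_conv_app_nth)

lemma X0: "A_at M A U gs 0 = A" unfolding A_at_def by simp

lemma F3: "t < length gs \<Longrightarrow> Sg M A U (gs ! t) \<inter> E t = {}"
proof -
  assume t: "t < length gs"
  { fix t' assume t': "t' < t"
    then have "gs ! t' \<noteq> gs ! t" using dist t by (simp add: nth_eq_iff_index_eq)
    then have "Sg M A U (gs ! t) \<inter> Sg M A U (gs ! t') = {}"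
      using Sg_disj[OF wfU] node_gs t t' by (metis order.strict_trans)
  }
  then show ?thesis unfolding E_def by blast
qed

lemma F4: "t < length gs \<Longrightarrow> Bg M A U (gs ! t) \<inter> E t = {}"
proof -
  assume t: "t < length gs"
  { fix t' assume t': "t' < t"
    let ?d = "gs ! t" and ?d' = "gs ! t'"
    have t'l: "t' < length gs" using t t' by simp
    have ne: "?d' \<noteq> ?d" using dist t t' by (simp add: nth_eq_iff_index_eq)
    have nd: "?d \<in> nodes U" "?d' \<in> nodes U" using node_gs t t'l by auto
    have "Bg M A U ?d \<inter> Sg M A U ?d' = {}"
    proof (cases "\<exists>x. ?d' = ?d @ x")
      case True
      then obtain x where x: "?d' = ?d @ x" by blast
      have "Cg U ?d' \<subseteq> Cg U ?d" using Cg_prefix[OF wfU, of ?d x] nd x by simp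
      then have "Ig M A U ?d' \<subseteq> Ig M A U ?d" by (rule Ig_mono)
      then show ?thesis using Sg_Ig[of M A U ?d'] Ig_Bg(1)[of M A U ?d] by blast
    next
      case F: False
      show ?thesis
      proof (cases "\<exists>x. ?d = ?d' @ x")
        case True
        then obtain x where x: "?d = ?d' @ x" by blast
        then have "x \<noteq> []" using ne by auto
        then have "t < t'" using ord[OF t'l t _ x] by simp
        then show ?thesis using t' by simp
      next
        case False
        obtain s1 s2 where "sub U ?d = Some s1" "sub U ?d' = Some s2" using nd unfolding nodes_def by auto
        then have "Cg U ?d \<inter> Cg U ?d' = {}" using sub_disj[OF wfU, of ?d s1 ?d' s2] F False unfolding Cg_def by auto
        then show ?thesis using Sg_Ig[of M A U ?d'] Ig_Bg(2)[of M A U ?d'] Ig_Bg(3)[of M A U ?d] by blast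
      qed
    qed
  }
  then show ?thesis unfolding E_def by blast
qed

lemma F5: "t < length gs \<Longrightarrow> Ig M A U (gs ! t) - Sg M A U (gs ! t) \<subseteq> E t"
proof
  fix y assume t: "t < length gs" and y: "y \<in> Ig M A U (gs ! t) - Sg M A U (gs ! t)"
  let ?d = "gs ! t"
  obtain s where s: "sub U ?d = Some s" using node_gs[OF t] unfolding nodes_def by auto
  show "y \<in> E t"
  proof (cases s)
    case (CLeaf C)
    then show ?thesis using leaf_Sg[of U ?d C M A] s y by simp
  next
    case (CNode C l r)
    note nl = nonleaf[OF s[unfolded CNode]]
    have "y \<in> Ig M A U (?d @ [False]) \<union> Ig M A U (?d @ [True])"
      using y Ig_split[OF nl(1), of M A] by blast
    then obtain c where c1: "y \<in> Ig M A U (?d @ [c])" by blast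
    obtain s' where c2: "sub U (?d @ [c]) = Some s'" using nl(2,3) by (cases c) auto
    note c = c1 c2
    then have "y \<in> (\<Union>f\<in>{f \<in> nodes U. \<exists>x. f = (?d @ [c]) @ x}. Sg M A U f)"
      using subtree_cover[of U "?d @ [c]" s' M A] by blast
    then obtain f x where f: "f \<in> nodes U" "f = (?d @ [c]) @ x" "y \<in> Sg M A U f" by blast
    have "f \<in> set gs" using f(1) setgs by simp
    then obtain j where j: "j < length gs" "gs ! j = f" unfolding in_set_conv_nth by blast
    have "j < t" using ord[OF t j(1), of "c # x"] j f by simp
    moreover have "y \<in> Sg M A U (gs ! j)" using f j by simp
    ultimately show ?thesis unfolding E_def by (intro UN_I[of j]) auto
  qed
qed

definition inv :: "nat \<Rightarrow> 'a mat \<Rightarrow> bool" where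
  "inv t P \<longleftrightarrow>
     (\<forall>i\<in>M - E t. \<forall>k\<in>M - E t. P i k = (if i = k then 1 else 0)) \<and>
     (\<forall>i\<in>M - E t. \<forall>e\<in>E t. A_at M A U gs t i e = 0) \<and>
     (\<forall>i\<in>M - E t. \<forall>j\<in>M. A_at M A U gs t i j = (\<Sum>k\<in>M. P i k * A k j)) \<and>
     (\<forall>d\<in>nodes U. \<forall>i\<in>(M - E t) \<inter> Ig M A U d. \<forall>k\<in>M. P i k \<noteq> 0 \<longrightarrow> k \<in> Ig M A U d)"

lemma inv0: "inv 0 (\<lambda>i k. if i = k then 1 else 0)"
  unfolding inv_def E0 X0 using finM by auto

end

context setting begin

lemma inv_step:
  assumes t: "t < length gs" and I: "inv t P"
  shows "\<exists>P'. inv (Suc t) P'"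
proof -
  let ?g = "gs ! t"
  define B where "B = Bg M A U ?g"
  define S where "S = Sg M A U ?g"
  define X where "X = A_at M A U gs t"
  define W where "W = mat_inv_on S X"
  define Lc where "Lc = mat_mult_on S X W"
  define R where "R = M - E t"
  have gN: "?g \<in> nodes U" using node_gs[OF t] .
  have ET: "E t \<subseteq> M" using E_M t by simp
  have SM: "S \<subseteq> M" unfolding S_def using Sg_M[OF gN] .
  have BM: "B \<subseteq> M" unfolding B_def using Bg_M[OF gN] .
  have SR: "S \<subseteq> R" unfolding R_def S_def using SM F3[OF t] S_def by blast
  have SI: "S \<subseteq> Ig M A U ?g" unfolding S_def by (rule Sg_Ig)
  have BS: "B \<inter> S = {}" unfolding B_def S_def using Sg_Ig[of M A U ?g] Ig_Bg(1)[of M A U ?g] by blast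
  have ES: "E (Suc t) = E t \<union> S" unfolding S_def by (rule E_Suc)
  have R': "M - E (Suc t) = R - S" unfolding ES R_def by blast
  have finS: "finite S" using SM finM finite_subset by blast
  have a: "\<forall>i\<in>M - E t. \<forall>k\<in>M - E t. P i k = (if i = k then 1 else 0)"
   and b: "\<forall>i\<in>M - E t. \<forall>e\<in>E t. X i e = 0"
   and c: "\<forall>i\<in>M - E t. \<forall>j\<in>M. X i j = (\<Sum>k\<in>M. P i k * A k j)"
   and d: "\<forall>d\<in>nodes U. \<forall>i\<in>(M - E t) \<inter> Ig M A U d. \<forall>k\<in>M. P i k \<noteq> 0 \<longrightarrow> k \<in> Ig M A U d"
    using I unfolding inv_def X_def by blast+
  have pdS: "pos_def_on S X" using rep_pd[OF finM ET pdA a b c] SR unfolding R_def by blast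
  have WX: "\<forall>i\<in>S. \<forall>j\<in>S. (\<Sum>k\<in>S. W i k * X k j) = (if i = j then 1 else 0)"
    using pd_inv[OF finS pdS] unfolding W_def is_inv_def by blast
  have Xs: "\<And>i j. i \<in> M \<Longrightarrow> A_at M A U gs (Suc t) i j = X i j - (if i \<in> B then (\<Sum>s\<in>S. Lc i s * X s j) else 0)"
  proof -
    fix i j assume i: "i \<in> M"
    show "A_at M A U gs (Suc t) i j = X i j - (if i \<in> B then (\<Sum>s\<in>S. Lc i s * X s j) else 0)"
      unfolding X_Suc[OF t] elim_step_def Let_def
      using elim_formula[OF finM SM BS i, of Lc X j]
      unfolding B_def S_def Lc_def W_def X_def by simp
  qed
  define P' where "P' = (\<lambda>i k. P i k - (if i \<in> B then (\<Sum>s\<in>S. Lc i s * P s k) else 0))"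
  have a': "\<forall>i\<in>M - E (Suc t). \<forall>k\<in>M - E (Suc t). P' i k = (if i = k then 1 else 0)"
  proof (intro ballI)
    fix i k assume i: "i \<in> M - E (Suc t)" and k: "k \<in> M - E (Suc t)"
    have "(\<Sum>s\<in>S. Lc i s * P s k) = 0"
    proof (rule sum.neutral, rule ballI)
      fix s assume s: "s \<in> S"
      then have "P s k = 0" using a SR k R' unfolding R_def by auto
      then show "Lc i s * P s k = 0" by simp
    qed
    then show "P' i k = (if i = k then 1 else 0)" unfolding P'_def using a i k R' unfolding R_def by auto
  qed
  have c': "\<forall>i\<in>M - E (Suc t). \<forall>j\<in>M. A_at M A U gs (Suc t) i j = (\<Sum>k\<in>M. P' i k * A k j)"
  proof (intro ballI)
    fix i j assume i: "i \<in> M - E (Suc t)" and j: "j \<in> M"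
    have iR: "i \<in> R" using i R' by blast
    have "(\<Sum>s\<in>S. Lc i s * X s j) = (\<Sum>s\<in>S. Lc i s * (\<Sum>k\<in>M. P s k * A k j))"
      by (intro sum.cong refl) (use c SR j in \<open>auto simp: R_def\<close>)
    also have "\<dots> = (\<Sum>k\<in>M. (\<Sum>s\<in>S. Lc i s * P s k) * A k j)" by (rule sum_assoc3)
    finally have 1: "(\<Sum>s\<in>S. Lc i s * X s j) = (\<Sum>k\<in>M. (\<Sum>s\<in>S. Lc i s * P s k) * A k j)" .
    have 2: "X i j = (\<Sum>k\<in>M. P i k * A k j)" using c iR j unfolding R_def by blast
    show "A_at M A U gs (Suc t) i j = (\<Sum>k\<in>M. P' i k * A k j)"
      using Xs[of i j] i 1 2 unfolding P'_def
      by (cases "i \<in> B") (simp_all add: algebra_simps sum_subtractf)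
  qed
  have b': "\<forall>i\<in>M - E (Suc t). \<forall>e\<in>E (Suc t). A_at M A U gs (Suc t) i e = 0"
  proof (intro ballI)
    fix i e assume i: "i \<in> M - E (Suc t)" and e: "e \<in> E (Suc t)"
    have iR: "i \<in> R" and iS: "i \<notin> S" using i R' by auto
    have iM: "i \<in> M" using i by blast
    show "A_at M A U gs (Suc t) i e = 0"
    proof (cases "e \<in> E t")
      case True
      have "(\<Sum>s\<in>S. Lc i s * X s e) = 0"
      proof (rule sum.neutral, rule ballI)
        fix s assume "s \<in> S"
        then have "X s e = 0" using b SR True unfolding R_def by blast
        then show "Lc i s * X s e = 0" by simp
      qed
      moreover have "X i e = 0" using b iR True unfolding R_def by blast
      ultimately show ?thesis using Xs[OF iM, of e] by simp
    next
      case False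
      then have eS: "e \<in> S" using e ES by blast
      show ?thesis
      proof (cases "i \<in> B")
        case True
        have "(\<Sum>s\<in>S. Lc i s * X s e) = (\<Sum>s\<in>S. (\<Sum>k\<in>S. X i k * W k s) * X s e)"
          unfolding Lc_def mat_mult_on_def ..
        also have "\<dots> = (\<Sum>k\<in>S. X i k * (\<Sum>s\<in>S. W k s * X s e))" by (rule sum_assoc3[symmetric])
        also have "\<dots> = (\<Sum>k\<in>S. X i k * (if k = e then 1 else 0))"
          by (intro sum.cong refl) (use WX eS in auto)
        also have "\<dots> = X i e" using finS eS by simp
        finally show ?thesis using Xs[OF iM, of e] True by simp
      next
        case False
        have eR: "e \<in> R" using eS SR by blast
        have "X i e = X e i" using rep_sym[OF finM ET pdA a b c] iR eR unfolding R_def by blast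
        also have "\<dots> = (\<Sum>k\<in>M. P e k * A k i)" using c eR iM unfolding R_def by blast
        also have "\<dots> = 0"
        proof (rule sum.neutral, rule ballI)
          fix k assume k: "k \<in> M"
          show "P e k * A k i = 0"
          proof (cases "P e k = 0")
            case True then show ?thesis by simp
          next
            case False
            have eI: "e \<in> Ig M A U ?g" using eS SI by blast
            have kI: "k \<in> Ig M A U ?g" using d gN eR eI k False unfolding R_def by blast
            have "i \<notin> Cg U ?g"
            proof
              assume iC: "i \<in> Cg U ?g"
              have "i \<in> Ig M A U ?g" using iC \<open>i \<notin> B\<close> unfolding B_def Ig_def Bg_def inner_def by blast
              then have "i \<in> E t" using F5[OF t] iS unfolding S_def by blast
              then show False using iR unfolding R_def by blast
            qed
            then have "A k i = 0" using Ig_zero[OF kI iM] by blast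
            then show ?thesis by simp
          qed
        qed
        finally have "X i e = 0" .
        then show ?thesis using Xs[OF iM, of e] False by simp
      qed
    qed
  qed
  have d': "\<forall>d\<in>nodes U. \<forall>i\<in>(M - E (Suc t)) \<inter> Ig M A U d. \<forall>k\<in>M. P' i k \<noteq> 0 \<longrightarrow> k \<in> Ig M A U d"
  proof (intro ballI impI)
    fix dd i k assume dd: "dd \<in> nodes U" and i: "i \<in> (M - E (Suc t)) \<inter> Ig M A U dd"
      and k: "k \<in> M" and P'k: "P' i k \<noteq> 0"
    have iR: "i \<in> R" using i R' by auto
    show "k \<in> Ig M A U dd"
    proof (cases "i \<in> B")
      case False
      then have "P i k \<noteq> 0" using P'k unfolding P'_def by simp
      then show ?thesis using d dd iR i k unfolding R_def by blast
    next
      case True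
      show ?thesis
      proof (rule ccontr)
        assume kn: "k \<notin> Ig M A U dd"
        have Pik: "P i k = 0" using d dd iR i k kn unfolding R_def by blast
        have lam: "Ig M A U ?g \<subseteq> Ig M A U dd"
        proof -
          have iCd: "i \<in> Cg U dd" using i Ig_Bg(2)[of M A U dd] by blast
          have iCg: "i \<in> Cg U ?g" using True Ig_Bg(3)[of M A U ?g] unfolding B_def by blast
          from Cg_laminar[OF wfU dd gN] iCd iCg
          have "Cg U dd \<subseteq> Cg U ?g \<or> Cg U ?g \<subseteq> Cg U dd" by blast
          then show ?thesis
          proof
            assume "Cg U dd \<subseteq> Cg U ?g"
            then have "Ig M A U dd \<subseteq> Ig M A U ?g" by (rule Ig_mono)
            then have "i \<in> Ig M A U ?g" using i by blast
            then show ?thesis using True Ig_Bg(1)[of M A U ?g] unfolding B_def by blast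
          next
            assume "Cg U ?g \<subseteq> Cg U dd"
            then show ?thesis by (rule Ig_mono)
          qed
        qed
        have "(\<Sum>s\<in>S. Lc i s * P s k) = 0"
        proof (rule sum.neutral, rule ballI)
          fix s assume s: "s \<in> S"
          have "P s k = 0"
          proof (rule ccontr)
            assume "P s k \<noteq> 0"
            moreover have "s \<in> (M - E t) \<inter> Ig M A U ?g" using s SR SI unfolding R_def by blast
            ultimately have "k \<in> Ig M A U ?g" using d gN k by blast
            then show False using lam kn by blast
          qed
          then show "Lc i s * P s k = 0" by simp
        qed
        then have "P' i k = 0" unfolding P'_def using Pik by simp
        then show False using P'k by simp
      qed
    qed
  qed
  have "inv (Suc t) P'" unfolding inv_def using a' b' c' d' by blast
  then show ?thesis by blast
qed

end

lemma pos_def_cong: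
  assumes "\<forall>i\<in>K. \<forall>j\<in>K. Y i j = Z i j" and "pos_def_on K Y"
  shows "pos_def_on K Z"
proof -
  have "\<And>x. (\<Sum>i\<in>K. \<Sum>j\<in>K. x i * Y i j * x j) = (\<Sum>i\<in>K. \<Sum>j\<in>K. x i * Z i j * x j)"
    by (intro sum.cong refl) (use assms(1) in auto)
  then show ?thesis using assms unfolding pos_def_on_def by auto
qed

context setting begin

lemma inv_all: "t \<le> length gs \<Longrightarrow> \<exists>P. inv t P"
proof (induction t)
  case 0
  then show ?case using inv0 by blast
next
  case (Suc t)
  then obtain P where "inv t P" by auto
  then show ?case using inv_step[of t P] Suc.prems by simp
qed

lemma main_local:
  assumes t: "t < length gs"
  shows "pos_def_on (Bg M A U (gs ! t)) (schur_U M A U (A_at M A U gs t) (gs ! t))"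
proof -
  let ?g = "gs ! t"
  define B where "B = Bg M A U ?g"
  define S where "S = Sg M A U ?g"
  define X where "X = A_at M A U gs t"
  define W where "W = mat_inv_on S X"
  define Lc where "Lc = mat_mult_on S X W"
  have gN: "?g \<in> nodes U" using node_gs[OF t] .
  have SM: "S \<subseteq> M" unfolding S_def using Sg_M[OF gN] .
  have BM: "B \<subseteq> M" unfolding B_def using Bg_M[OF gN] .
  have BS: "B \<inter> S = {}" unfolding B_def S_def using Sg_Ig[of M A U ?g] Ig_Bg(1)[of M A U ?g] by blast
  have ES: "E (Suc t) = E t \<union> S" unfolding S_def by (rule E_Suc)
  have BR: "B \<subseteq> M - E (Suc t)" using BM BS F4[OF t] ES unfolding B_def by blast
  obtain P where I: "inv (Suc t) P" using inv_all[of "Suc t"] t by auto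
  have ET: "E (Suc t) \<subseteq> M" using E_M[of "Suc t"] t by simp
  have pd: "pos_def_on B (A_at M A U gs (Suc t))"
    by (rule rep_pd[OF finM ET pdA _ _ _ BR, of P]) (use I in \<open>simp_all add: inv_def\<close>)
  have eq: "\<forall>i\<in>B. \<forall>j\<in>B. A_at M A U gs (Suc t) i j = schur_U M A U X ?g i j"
  proof (intro ballI)
    fix i j assume i: "i \<in> B" and j: "j \<in> B"
    have iM: "i \<in> M" using i BM by blast
    have "A_at M A U gs (Suc t) i j = X i j - (\<Sum>s\<in>S. Lc i s * X s j)"
      unfolding X_Suc[OF t] elim_step_def Let_def
      using elim_formula[OF finM SM BS iM, of Lc X j] i
      unfolding B_def S_def Lc_def W_def X_def by simp
    also have "(\<Sum>s\<in>S. Lc i s * X s j) = (\<Sum>k\<in>S. \<Sum>l\<in>S. X i k * W k l * X l j)"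
    proof -
      have "(\<Sum>s\<in>S. Lc i s * X s j) = (\<Sum>l\<in>S. \<Sum>k\<in>S. X i k * W k l * X l j)"
        unfolding Lc_def mat_mult_on_def by (simp add: sum_distrib_right)
      also have "\<dots> = (\<Sum>k\<in>S. \<Sum>l\<in>S. X i k * W k l * X l j)" by (rule sum.swap)
      finally show ?thesis .
    qed
    finally show "A_at M A U gs (Suc t) i j = schur_U M A U X ?g i j"
      unfolding schur_U_def Let_def S_def W_def by simp
  qed
  show ?thesis using pos_def_cong[OF eq pd] unfolding B_def X_def .
qed

end

theorem mainTheorem2:
  fixes M :: "'a set" and A :: "'a mat" and T :: "'a ctree"
    and p :: "bool list" and gs :: "bool list list" and t :: nat
  assumes "finite M"
    and "pos_def_on M A"
    and "cluster_tree M T"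
    and "is_leaf_path T p"
    and "consistent_ordering (aug M T p) gs"
    and "t < length gs"
  shows "pos_def_on (Bg M A (aug M T p) (gs ! t))
           (schur_U M A (aug M T p) (A_at M A (aug M T p) gs t) (gs ! t))"
proof -
  have w: "wf_ctree (aug M T p) \<and> cl (aug M T p) \<subseteq> M" using aug_wf[OF assms(3,4)] .
  interpret setting M A "aug M T p" gs
    by unfold_locales (use assms w in auto)
  show ?thesis by (rule main_local[OF assms(6)])
qed

end
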